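(* Let $\phi_2$ be a topological flow on a compact metric space $(M_2,\mathrm{dist}_2)$ whose limit set $L(\phi_2)$ is a finite set of singularities, each Lyapunov stable or Lyapunov unstable. Let $\varepsilon_0>0$ and $r_2>0$, and put $F=M_2\setminus\bigcup_{p\in\mathrm{Sing}(\phi_2)}B(r_2,p)$. Then there exist $d_1>0$ and $S_0>0$ such that whenever $\xi_2$ is a $d_1$-pseudotrajectory of $\phi_2$ with $\xi_2(s_0)\in F$ for some $s_0\in\mathbb{R}$, there exist a Lyapunov unstable point $p\in\mathrm{Sing}(\phi_2)$ and a Lyapunov stable point $q\in\mathrm{Sing}(\phi_2)$ such that $\xi_2(t+s_0)\in B(r_2,p)$ for all $t\le -S_0$, $\xi_2(t+s_0)\in B(r_2,q)$ for all $t\ge S_0$, and $\mathrm{dist}_2(\xi_2(t+s_0),\phi_2(t,\xi_2(s_0)))<\min\{r_2,\varepsilon_0/4\}$ for all $t\in[-S_0,2S_0]$.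
   Context: A topological flow is a continuous $\phi:\mathbb{R}\times M\to M$ with $\phi(0,x)=x$, $\phi(s+t,x)=\phi(s,\phi(t,x))$; $\mathrm{Sing}$ is its set of fixed points. A singularity $p$ is Lyapunov stable if for every neighborhood $V$ of $p$ there is a neighborhood $U$ of $p$ with $\phi(t,x)\in V$ for all $t\ge0$, $x\in U$; Lyapunov unstable if the same holds for $t\le0$. $L(\phi)$ is the union over all $x$ of the $\omega$- and $\alpha$-limit sets of $x$. A $d$-pseudotrajectory is a map $\xi:\mathbb{R}\to M$ with $\mathrm{dist}(\xi(t+s),\phi(s,\xi(t)))<d$ for all $t\in\mathbb{R}$, $s\in[0,1]$. $B(r,p)$ is the open ball. *)

theory Defs
  imports "HOL-Analysis.Analysis"
begin

definition is_flow :: "(real \<Rightarrow> 'a::metric_space \<Rightarrow> 'a) \<Rightarrow> bool" where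
  "is_flow \<phi> \<longleftrightarrow> continuous_on UNIV (\<lambda>(t, x). \<phi> t x)
     \<and> (\<forall>x. \<phi> 0 x = x) \<and> (\<forall>s t x. \<phi> (s + t) x = \<phi> s (\<phi> t x))"

definition Sing :: "(real \<Rightarrow> 'a \<Rightarrow> 'a) \<Rightarrow> 'a set" where
  "Sing \<phi> = {x. \<forall>t. \<phi> t x = x}"

definition lyap_stable :: "(real \<Rightarrow> 'a::topological_space \<Rightarrow> 'a) \<Rightarrow> 'a \<Rightarrow> bool" where
  "lyap_stable \<phi> p \<longleftrightarrow> (\<forall>V. open V \<and> p \<in> V \<longrightarrow>
     (\<exists>U. open U \<and> p \<in> U \<and> (\<forall>x\<in>U. \<forall>t\<ge>0. \<phi> t x \<in> V)))"

definition lyap_unstable :: "(real \<Rightarrow> 'a::topological_space \<Rightarrow> 'a) \<Rightarrow> 'a \<Rightarrow> bool" where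
  "lyap_unstable \<phi> p \<longleftrightarrow> (\<forall>V. open V \<and> p \<in> V \<longrightarrow>
     (\<exists>U. open U \<and> p \<in> U \<and> (\<forall>x\<in>U. \<forall>t\<le>0. \<phi> t x \<in> V)))"

definition omega_limit :: "(real \<Rightarrow> 'a::topological_space \<Rightarrow> 'a) \<Rightarrow> 'a \<Rightarrow> 'a set" where
  "omega_limit \<phi> x = {y. \<exists>s::nat \<Rightarrow> real. filterlim s at_top sequentially
                              \<and> (\<lambda>n. \<phi> (s n) x) \<longlonglongrightarrow> y}"

definition alpha_limit :: "(real \<Rightarrow> 'a::topological_space \<Rightarrow> 'a) \<Rightarrow> 'a \<Rightarrow> 'a set" where
  "alpha_limit \<phi> x = {y. \<exists>s::nat \<Rightarrow> real. filterlim s at_bot sequentially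
                              \<and> (\<lambda>n. \<phi> (s n) x) \<longlonglongrightarrow> y}"

definition limit_set :: "(real \<Rightarrow> 'a::topological_space \<Rightarrow> 'a) \<Rightarrow> 'a set" where
  "limit_set \<phi> = (\<Union>x. omega_limit \<phi> x \<union> alpha_limit \<phi> x)"

definition pseudotraj :: "(real \<Rightarrow> 'a::metric_space \<Rightarrow> 'a) \<Rightarrow> real \<Rightarrow> (real \<Rightarrow> 'a) \<Rightarrow> bool" where
  "pseudotraj \<phi> d \<xi> \<longleftrightarrow> (\<forall>t. \<forall>s\<in>{0..1}. dist (\<xi> (t + s)) (\<phi> s (\<xi> t)) < d)"

end

theory Submission
  imports Defs
begin

lemma flow_cont:
  assumes "is_flow \<phi>" shows "continuous_on S (\<lambda>x. \<phi> t x)"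
proof -
  have c: "continuous_on UNIV (\<lambda>(t, x). \<phi> t x)" using assms unfolding is_flow_def by blast
  have "continuous_on UNIV ((\<lambda>(t, x). \<phi> t x) \<circ> (\<lambda>x. (t, x)))"
    by (rule continuous_on_compose) (auto intro!: continuous_intros intro: continuous_on_subset[OF c])
  then show ?thesis by (auto simp: o_def intro: continuous_on_subset)
qed

lemma flow_0: "is_flow \<phi> \<Longrightarrow> \<phi> 0 x = x" unfolding is_flow_def by blast
lemma flow_add: "is_flow \<phi> \<Longrightarrow> \<phi> (s + t) x = \<phi> s (\<phi> t x)" unfolding is_flow_def by blast
lemma flow_inv: "is_flow \<phi> \<Longrightarrow> \<phi> (-t) (\<phi> t x) = x"
  using flow_add[of \<phi> "-t" t x] flow_0[of \<phi> x] by simp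

lemma rev_flow: assumes "is_flow \<phi>" shows "is_flow (\<lambda>t. \<phi> (-t))"
proof -
  have c: "continuous_on UNIV (\<lambda>(t, x). \<phi> t x)" using assms unfolding is_flow_def by blast
  have "continuous_on UNIV ((\<lambda>(t, x). \<phi> t x) \<circ> (\<lambda>x. (-fst x, snd x)))"
    by (rule continuous_on_compose) (auto intro!: continuous_intros intro: continuous_on_subset[OF c])
  moreover have "((\<lambda>(t, x). \<phi> t x) \<circ> (\<lambda>x. (-fst x, snd x))) = (\<lambda>(t, x). \<phi> (-t) x)" by auto
  ultimately show ?thesis using assms unfolding is_flow_def
    by (metis add.commute minus_add_distrib minus_zero)
qed

lemma rev_Sing: "Sing (\<lambda>t. \<phi> (-t)) = Sing \<phi>"
  unfolding Sing_def by (metis minus_minus)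

lemma rev_omega: "omega_limit (\<lambda>t. \<phi> (-t)) x = alpha_limit \<phi> x"
proof -
  have "(\<exists>s::nat\<Rightarrow>real. filterlim s at_top sequentially \<and> (\<lambda>n. \<phi> (- s n) x) \<longlonglongrightarrow> y) \<longleftrightarrow>
        (\<exists>s::nat\<Rightarrow>real. filterlim s at_bot sequentially \<and> (\<lambda>n. \<phi> (s n) x) \<longlonglongrightarrow> y)" for y
  proof
    assume "\<exists>s::nat\<Rightarrow>real. filterlim s at_top sequentially \<and> (\<lambda>n. \<phi> (- s n) x) \<longlonglongrightarrow> y"
    then obtain s :: "nat\<Rightarrow>real" where "filterlim s at_top sequentially" "(\<lambda>n. \<phi> (- s n) x) \<longlonglongrightarrow> y" by blast
    then show "\<exists>s::nat\<Rightarrow>real. filterlim s at_bot sequentially \<and> (\<lambda>n. \<phi> (s n) x) \<longlonglongrightarrow> y"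
      by (intro exI[of _ "\<lambda>n. - s n"]) (simp add: filterlim_uminus_at_bot)
  next
    assume "\<exists>s::nat\<Rightarrow>real. filterlim s at_bot sequentially \<and> (\<lambda>n. \<phi> (s n) x) \<longlonglongrightarrow> y"
    then obtain s :: "nat\<Rightarrow>real" where "filterlim s at_bot sequentially" "(\<lambda>n. \<phi> (s n) x) \<longlonglongrightarrow> y" by blast
    then show "\<exists>s::nat\<Rightarrow>real. filterlim s at_top sequentially \<and> (\<lambda>n. \<phi> (- s n) x) \<longlonglongrightarrow> y"
      by (intro exI[of _ "\<lambda>n. - s n"]) (simp add: filterlim_uminus_at_bot)
  qed
  then show ?thesis unfolding omega_limit_def alpha_limit_def by simp
qed

lemma rev_alpha: "alpha_limit (\<lambda>t. \<phi> (-t)) x = omega_limit \<phi> x"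
proof -
  have "alpha_limit (\<lambda>t. \<phi> (-t)) x = omega_limit (\<lambda>t. (\<lambda>t. \<phi> (-t)) (-t)) x"
    using rev_omega[of "\<lambda>t. \<phi> (-t)" x] by simp
  then show ?thesis by simp
qed

lemma rev_limit: "limit_set (\<lambda>t. \<phi> (-t)) = limit_set \<phi>"
  unfolding limit_set_def rev_omega rev_alpha by blast

lemma rev_stable: "lyap_stable (\<lambda>t. \<phi> (-t)) p = lyap_unstable \<phi> p"
  unfolding lyap_stable_def lyap_unstable_def
  by (metis neg_0_le_iff_le minus_minus)

lemma rev_unstable: "lyap_unstable (\<lambda>t. \<phi> (-t)) p = lyap_stable \<phi> p"
  unfolding lyap_stable_def lyap_unstable_def
  by (metis neg_0_le_iff_le minus_minus neg_le_0_iff_le)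

lemma Sing_sub_limit: "Sing \<phi> \<subseteq> limit_set \<phi>"
proof
  fix p assume "p \<in> Sing \<phi>"
  then have "(\<lambda>n. \<phi> (real n) p) \<longlonglongrightarrow> p" by (simp add: Sing_def)
  moreover have "filterlim (\<lambda>n. real n) at_top sequentially" by (rule filterlim_real_sequentially)
  ultimately have "p \<in> omega_limit \<phi> p" unfolding omega_limit_def by blast
  then show "p \<in> limit_set \<phi>" unfolding limit_set_def by blast
qed

lemma flow_unif:
  fixes \<phi> :: "real \<Rightarrow> 'a::metric_space \<Rightarrow> 'a"
  assumes "is_flow \<phi>" "compact (UNIV::'a set)" "compact K" "e > 0"
  shows "\<exists>\<delta>>0. \<forall>t\<in>K. \<forall>x y. dist x y < \<delta> \<longrightarrow> dist (\<phi> t x) (\<phi> t y) < e"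
proof -
  have c: "continuous_on UNIV (\<lambda>(t, x). \<phi> t x)" using assms unfolding is_flow_def by blast
  have "uniformly_continuous_on (K \<times> UNIV) (\<lambda>(t, x). \<phi> t x)"
    by (rule compact_uniformly_continuous) (auto intro: continuous_on_subset[OF c] compact_Times assms)
  then obtain d where d: "d > 0" "\<forall>x\<in>K \<times> UNIV. \<forall>x'\<in>K \<times> UNIV. dist x' x < d \<longrightarrow>
      dist ((\<lambda>(t, x). \<phi> t x) x') ((\<lambda>(t, x). \<phi> t x) x) < e"
    unfolding uniformly_continuous_on_def using assms(4) by blast
  show ?thesis
  proof (intro exI[of _ d] conjI ballI allI impI)
    fix t and x y :: 'a assume "t \<in> K" "dist x y < d"
    then show "dist (\<phi> t x) (\<phi> t y) < e"
      using d(2)[rule_format, of "(t,y)" "(t,x)"] by (simp add: dist_Pair_Pair)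
  qed (use d in auto)
qed

lemma shadow_nat:
  fixes \<phi> :: "real \<Rightarrow> 'a::metric_space \<Rightarrow> 'a"
  assumes fl: "is_flow \<phi>" and cp: "compact (UNIV::'a set)"
  shows "\<forall>\<eta>>0. \<exists>d>0. \<forall>\<xi>. pseudotraj \<phi> d \<xi> \<longrightarrow> (\<forall>s. \<forall>t\<in>{0..real n}. dist (\<xi> (s+t)) (\<phi> t (\<xi> s)) < \<eta>)"
proof (induction n)
  case 0
  then show ?case using flow_0[OF fl] by (auto intro: exI[of _ 1])
next
  case (Suc n)
  show ?case
  proof (intro allI impI)
    fix \<eta> :: real assume "\<eta> > 0"
    then have "\<eta>/2 > 0" by simp
    from flow_unif[OF fl cp compact_Icc this, of 0 1] obtain \<delta> where
      \<delta>: "\<delta> > 0" "\<forall>t\<in>{0..1}. \<forall>x y. dist x y < \<delta> \<longrightarrow> dist (\<phi> t x) (\<phi> t y) < \<eta>/2" by blast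
    have "min \<delta> \<eta> > 0" using \<delta> \<open>\<eta>>0\<close> by simp
    with Suc obtain d' where d': "d' > 0" "\<forall>\<xi>. pseudotraj \<phi> d' \<xi> \<longrightarrow>
        (\<forall>s. \<forall>t\<in>{0..real n}. dist (\<xi> (s+t)) (\<phi> t (\<xi> s)) < min \<delta> \<eta>)" by blast
    show "\<exists>d>0. \<forall>\<xi>. pseudotraj \<phi> d \<xi> \<longrightarrow> (\<forall>s. \<forall>t\<in>{0..real (Suc n)}. dist (\<xi> (s+t)) (\<phi> t (\<xi> s)) < \<eta>)"
    proof (intro exI[of _ "min d' (\<eta>/2)"] conjI allI impI ballI)
      show "min d' (\<eta>/2) > 0" using d' \<open>\<eta>>0\<close> by simp
      fix \<xi> s t assume ps: "pseudotraj \<phi> (min d' (\<eta>/2)) \<xi>" and t: "t \<in> {0..real (Suc n)}"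
      have ps': "pseudotraj \<phi> d' \<xi>" using ps unfolding pseudotraj_def
        by (meson less_le_trans min.cobounded1)
      show "dist (\<xi> (s+t)) (\<phi> t (\<xi> s)) < \<eta>"
      proof (cases "t \<le> real n")
        case True then show ?thesis using d'(2) ps' t by fastforce
      next
        case False
        define r where "r = t - real n"
        have r: "r \<in> {0..1}" using False t unfolding r_def by auto
        have e1: "dist (\<xi> (s + real n)) (\<phi> (real n) (\<xi> s)) < \<delta>"
          using d'(2) ps' by fastforce
        have e2: "dist (\<phi> r (\<xi> (s + real n))) (\<phi> r (\<phi> (real n) (\<xi> s))) < \<eta>/2"
          using \<delta>(2) r e1 by blast
        have e3: "dist (\<xi> (s + real n + r)) (\<phi> r (\<xi> (s + real n))) < \<eta>/2"
          using ps r unfolding pseudotraj_def by fastforce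
        have eq: "\<phi> r (\<phi> (real n) (\<xi> s)) = \<phi> t (\<xi> s)" using flow_add[OF fl, of r "real n"] r_def by simp
        have "s + real n + r = s + t" using r_def by simp
        with e3 have e3': "dist (\<xi> (s+t)) (\<phi> r (\<xi> (s + real n))) < \<eta>/2" by simp
        have "dist (\<xi> (s+t)) (\<phi> t (\<xi> s)) \<le> dist (\<xi> (s+t)) (\<phi> r (\<xi> (s + real n))) + dist (\<phi> r (\<xi> (s + real n))) (\<phi> t (\<xi> s))"
          by (rule dist_triangle)
        then show ?thesis using e2 e3' eq by simp
      qed
    qed
  qed
qed

lemma shadow:
  fixes \<phi> :: "real \<Rightarrow> 'a::metric_space \<Rightarrow> 'a"
  assumes fl: "is_flow \<phi>" and cp: "compact (UNIV::'a set)" and "\<eta> > 0"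
  shows "\<exists>d>0. \<forall>\<xi>. pseudotraj \<phi> d \<xi> \<longrightarrow> (\<forall>s. \<forall>t\<in>{0..T}. dist (\<xi> (s+t)) (\<phi> t (\<xi> s)) < \<eta>)
           \<and> (\<forall>s. \<forall>t\<in>{0..T}. dist (\<xi> (s-t)) (\<phi> (-t) (\<xi> s)) < \<eta>)"
proof -
  from flow_unif[OF fl cp compact_Icc assms(3), of "-T" 0] obtain \<delta> where
    \<delta>: "\<delta> > 0" "\<forall>t\<in>{-T..0}. \<forall>x y. dist x y < \<delta> \<longrightarrow> dist (\<phi> t x) (\<phi> t y) < \<eta>" by blast
  have "min \<delta> \<eta> > 0" using \<delta> assms by simp
  with shadow_nat[OF fl cp, of "nat \<lceil>T\<rceil>"] obtain d where d: "d > 0" "\<forall>\<xi>. pseudotraj \<phi> d \<xi> \<longrightarrow>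
     (\<forall>s. \<forall>t\<in>{0..real (nat \<lceil>T\<rceil>)}. dist (\<xi> (s+t)) (\<phi> t (\<xi> s)) < min \<delta> \<eta>)" by blast
  have sub: "{0..T} \<subseteq> {0..real (nat \<lceil>T\<rceil>)}"
    by (auto simp: real_nat_ceiling_ge) 
  show ?thesis
  proof (intro exI[of _ d] conjI allI impI ballI)
    fix \<xi> assume ps: "pseudotraj \<phi> d \<xi>"
    have F: "dist (\<xi> (s+t)) (\<phi> t (\<xi> s)) < min \<delta> \<eta>" if "t \<in> {0..T}" for s t
      using d(2) ps sub that by blast
    fix s t assume t: "t \<in> {0..T}"
    show "dist (\<xi> (s+t)) (\<phi> t (\<xi> s)) < \<eta>" using F[OF t] by simp
    have "dist (\<xi> (s-t+t)) (\<phi> t (\<xi> (s-t))) < \<delta>" using F[OF t, of "s-t"] by simp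
    then have "dist (\<phi> (-t) (\<xi> s)) (\<phi> (-t) (\<phi> t (\<xi> (s-t)))) < \<eta>"
      using \<delta>(2) t by simp
    then show "dist (\<xi> (s-t)) (\<phi> (-t) (\<xi> s)) < \<eta>" using flow_inv[OF fl] by (simp add: dist_commute)
  qed (use d in auto)
qed

lemma omega_exists:
  fixes \<phi> :: "real \<Rightarrow> 'a::metric_space \<Rightarrow> 'a"
  assumes cp: "compact (UNIV::'a set)"
  shows "\<exists>y (s::nat\<Rightarrow>real). filterlim s at_top sequentially \<and> (\<forall>n. s n \<ge> c) \<and> (\<lambda>n. \<phi> (s n) x) \<longlonglongrightarrow> y"
proof -
  have "seq_compact (UNIV::'a set)" using cp by (rule compact_imp_seq_compact)
  then obtain l r where r: "strict_mono r" "((\<lambda>n. \<phi> (c + real n) x) \<circ> r) \<longlonglongrightarrow> l"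
    unfolding seq_compact_def by blast
  have lim: "filterlim (\<lambda>n. c + real n) at_top sequentially"
    by (rule filterlim_tendsto_add_at_top[OF tendsto_const filterlim_real_sequentially])
  have "filterlim (\<lambda>n. c + real (r n)) at_top sequentially"
    by (rule filterlim_at_top_mono[OF lim]) (simp add: seq_suble[OF r(1)])
  moreover have "\<forall>n. c + real (r n) \<ge> c" by simp
  ultimately show ?thesis using r(2) by (intro exI[of _ l] exI[of _ "\<lambda>n. c + real (r n)"]) (simp add: o_def)
qed

lemma omega_in_limit:
  "filterlim s at_top sequentially \<Longrightarrow> (\<lambda>n. \<phi> (s n) x) \<longlonglongrightarrow> y \<Longrightarrow> y \<in> limit_set \<phi>"
  unfolding limit_set_def omega_limit_def by blast

lemma trap:
  fixes \<phi> :: "real \<Rightarrow> 'a::metric_space \<Rightarrow> 'a"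
  assumes fl: "is_flow \<phi>" and cp: "compact (UNIV::'a set)"
    and fin: "finite (limit_set \<phi>)" and st: "lyap_stable \<phi> q" and "\<epsilon> > 0"
  shows "\<exists>\<rho>>0. \<exists>\<eta>>0. \<exists>T. \<forall>\<xi>. (\<forall>s. \<forall>t\<in>{0..T}. dist (\<xi> (s+t)) (\<phi> t (\<xi> s)) < \<eta>) \<longrightarrow>
           (\<forall>s. \<xi> s \<in> cball q \<rho> \<longrightarrow> (\<forall>t\<ge>0. \<xi> (s+t) \<in> ball q \<epsilon>))"
proof -
  obtain e where e: "e > 0" "\<forall>x\<in>limit_set \<phi>. x \<noteq> q \<longrightarrow> e \<le> dist q x"
    using finite_set_avoid[OF fin, of q] by blast
  define \<epsilon>2 where "\<epsilon>2 = min \<epsilon> e / 2"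
  have \<epsilon>2: "0 < \<epsilon>2" "\<epsilon>2 < \<epsilon>" "\<epsilon>2 < e" using e \<open>\<epsilon>>0\<close> unfolding \<epsilon>2_def by auto
  obtain U where U: "open U" "q \<in> U" "\<forall>x\<in>U. \<forall>t\<ge>0. \<phi> t x \<in> ball q \<epsilon>2"
    using st \<epsilon>2(1) unfolding lyap_stable_def by (meson centre_in_ball open_ball)
  obtain \<rho> where \<rho>: "\<rho> > 0" "cball q \<rho> \<subseteq> U" using U open_contains_cball by blast
  have reach: "\<exists>t\<ge>1. \<phi> t x \<in> ball q (\<rho>/2)" if x: "x \<in> cball q \<rho>" for x
  proof -
    obtain y and s :: "nat \<Rightarrow> real" where s: "filterlim s at_top sequentially" "\<forall>n. s n \<ge> 1"
      "(\<lambda>n. \<phi> (s n) x) \<longlonglongrightarrow> y" using omega_exists[OF cp, of 1 \<phi> x] by blast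
    have yl: "y \<in> limit_set \<phi>" using omega_in_limit[of s \<phi> x y] s(1) s(3) by blast
    have "\<forall>n. dist q (\<phi> (s n) x) \<le> \<epsilon>2" using U(3) x \<rho>(2) s(2)
      by (meson dual_order.trans less_imp_le mem_ball subsetD zero_le_one)
    moreover have "(\<lambda>n. dist q (\<phi> (s n) x)) \<longlonglongrightarrow> dist q y" by (intro tendsto_intros s(3))
    ultimately have "dist q y \<le> \<epsilon>2" by (meson LIMSEQ_le_const2)
    then have "y = q" using e(2) yl \<epsilon>2 by force
    then have "eventually (\<lambda>n. dist (\<phi> (s n) x) q < \<rho>/2) sequentially"
      using s(3) \<rho>(1) unfolding tendsto_iff by (metis half_gt_zero)
    then obtain n where "dist (\<phi> (s n) x) q < \<rho>/2" by (meson eventually_sequentially order_refl)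
    then show ?thesis using s(2) by (intro exI[of _ "s n"]) (simp add: dist_commute)
  qed
  have ccomp: "compact (cball q \<rho>)" using closed_Int_compact[OF closed_cball cp] by simp
  obtain K where K: "K \<subseteq> {1..}" "finite K" "cball q \<rho> \<subseteq> (\<Union>t\<in>K. \<phi> t -` ball q (\<rho>/2))"
  proof (rule compactE_image[OF ccomp, of "{1..}" "\<lambda>t. \<phi> t -` ball q (\<rho>/2)"])
    show "open (\<phi> t -` ball q (\<rho>/2))" for t by (rule open_vimage[OF open_ball flow_cont[OF fl]])
    show "cball q \<rho> \<subseteq> (\<Union>t\<in>{1..}. \<phi> t -` ball q (\<rho>/2))" using reach by fastforce
  qed blast
  define T where "T = Max (insert 1 K)"
  have hT: "T \<ge> 1" unfolding T_def using K(2) by simp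
  have reachT: "\<exists>t\<in>{1..T}. \<phi> t x \<in> ball q (\<rho>/2)" if xc: "x \<in> cball q \<rho>" for x
  proof -
    obtain t where "t \<in> K" "\<phi> t x \<in> ball q (\<rho>/2)" using K(3) xc by blast
    moreover have "t \<le> T" unfolding T_def using K(2) \<open>t\<in>K\<close> by simp
    ultimately show ?thesis using K(1) by (intro bexI[of _ t]) auto
  qed
  define \<eta> where "\<eta> = min (\<rho>/2) (\<epsilon> - \<epsilon>2)"
  have \<eta>: "\<eta> > 0" using \<rho> \<epsilon>2 unfolding \<eta>_def by simp
  show ?thesis
  proof (rule exI[of _ \<rho>], intro conjI \<rho>(1), rule exI[of _ \<eta>], intro conjI \<eta>, rule exI[of _ T], rule allI, rule impI)
    fix \<xi> assume sh: "\<forall>s. \<forall>t\<in>{0..T}. dist (\<xi> (s+t)) (\<phi> t (\<xi> s)) < \<eta>"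
    have direct: "\<xi> (s+t) \<in> ball q \<epsilon>" if "\<xi> s \<in> cball q \<rho>" "t \<in> {0..T}" for s t
    proof -
      have "\<phi> t (\<xi> s) \<in> ball q \<epsilon>2" using U(3) \<rho>(2) that by auto
      moreover have "dist (\<xi> (s+t)) (\<phi> t (\<xi> s)) < \<epsilon> - \<epsilon>2" using sh that \<eta>_def by fastforce
      ultimately show ?thesis using dist_triangle[of q "\<xi> (s+t)" "\<phi> t (\<xi> s)"]
        by (simp add: dist_commute)
    qed
    have ind: "\<forall>s. \<xi> s \<in> cball q \<rho> \<longrightarrow> (\<forall>t\<in>{0..real n}. \<xi> (s+t) \<in> ball q \<epsilon>)" for n
    proof (induction n)
      case 0
      then show ?case using direct[of _ 0] hT by auto
    next
      case (Suc n)
      show ?case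
      proof (intro allI impI ballI)
    fix s t assume xs: "\<xi> s \<in> cball q \<rho>" and t: "t \<in> {0..real (Suc n)}"
        obtain t1 where t1: "t1 \<in> {1..T}" "\<phi> t1 (\<xi> s) \<in> ball q (\<rho>/2)" using reachT[OF xs] by blast
        have "dist (\<xi> (s+t1)) (\<phi> t1 (\<xi> s)) < \<rho>/2" using sh t1(1) \<eta>_def by fastforce
        then have x1: "\<xi> (s+t1) \<in> cball q \<rho>" using t1(2) dist_triangle[of q "\<xi> (s+t1)" "\<phi> t1 (\<xi> s)"]
          by (simp add: dist_commute)
        show "\<xi> (s+t) \<in> ball q \<epsilon>"
        proof (cases "t \<le> T")
          case True then show ?thesis using direct xs t by simp
        next
          case False
          then have "t - t1 \<in> {0..real n}" using t t1(1) by auto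
          then have "\<xi> (s + t1 + (t - t1)) \<in> ball q \<epsilon>" using Suc.IH x1 by blast
          then show ?thesis by simp
        qed
      qed
    qed
    show "\<forall>s. \<xi> s \<in> cball q \<rho> \<longrightarrow> (\<forall>t\<ge>0. \<xi> (s+t) \<in> ball q \<epsilon>)"
    proof (intro allI impI)
      fix s t assume xs: "\<xi> s \<in> cball q \<rho>" and "(t::real) \<ge> 0"
      then have "t \<in> {0..real (nat \<lceil>t\<rceil>)}" by (simp add: real_nat_ceiling_ge)
      then show "\<xi> (s+t) \<in> ball q \<epsilon>" using ind xs by blast
    qed
  qed
qed

lemma pseudo_mono: "pseudotraj \<phi> d' \<xi> \<Longrightarrow> d' \<le> d \<Longrightarrow> pseudotraj \<phi> d \<xi>"
  unfolding pseudotraj_def by (meson less_le_trans)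

lemma finite_unif:
  fixes P :: "'b \<Rightarrow> real \<Rightarrow> real \<Rightarrow> bool"
  assumes "finite A" "\<forall>a\<in>A. \<exists>x>0. \<exists>y>0. P a x y"
    and mono: "\<And>a x y x' y'. P a x y \<Longrightarrow> 0 < x' \<Longrightarrow> x' \<le> x \<Longrightarrow> 0 < y' \<Longrightarrow> y' \<le> y \<Longrightarrow> P a x' y'"
  shows "\<exists>x>0. \<exists>y>0. \<forall>a\<in>A. P a x y"
  using assms(1,2)
proof (induction A rule: finite_induct)
  case empty
  then show ?case by (auto intro: exI[of _ 1])
next
  case (insert a A)
  then obtain x y where xy: "x > 0" "y > 0" "\<forall>a\<in>A. P a x y" by blast
  from insert obtain x1 y1 where xy1: "x1 > 0" "y1 > 0" "P a x1 y1" by blast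
  have "P a (min x x1) (min y y1)" by (rule mono[of a x1 y1]) (use xy1 xy in auto)
  moreover have "\<forall>b\<in>A. P b (min x x1) (min y y1)"
  proof
    fix b assume "b \<in> A"
    then have "P b x y" using xy by blast
    then show "P b (min x x1) (min y y1)" by (rule mono) (use xy xy1 in auto)
  qed
  ultimately show ?case using xy xy1
    by (intro exI[of _ "min x x1"] conjI exI[of _ "min y y1"]) auto
qed

lemma trap_pt:
  fixes \<phi> :: "real \<Rightarrow> 'a::metric_space \<Rightarrow> 'a"
  assumes fl: "is_flow \<phi>" and cp: "compact (UNIV::'a set)"
    and fin: "finite (limit_set \<phi>)" and st: "lyap_stable \<phi> q" and "\<epsilon> > 0"
  shows "\<exists>\<rho>>0. \<exists>d>0. \<forall>\<xi>. pseudotraj \<phi> d \<xi> \<longrightarrow>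
           (\<forall>s. \<xi> s \<in> cball q \<rho> \<longrightarrow> (\<forall>t\<ge>0. \<xi> (s+t) \<in> ball q \<epsilon>))"
proof -
  obtain \<rho> \<eta> T where tr: "\<rho> > 0" "\<eta> > 0" "\<And>\<xi> s t. (\<forall>s. \<forall>t\<in>{0..T}. dist (\<xi> (s+t)) (\<phi> t (\<xi> s)) < \<eta>) \<Longrightarrow>
           \<xi> s \<in> cball q \<rho> \<Longrightarrow> t \<ge> 0 \<Longrightarrow> \<xi> (s+t) \<in> ball q \<epsilon>"
    using trap[OF fl cp fin st \<open>\<epsilon>>0\<close>] by blast
  obtain d where d: "d > 0" "\<forall>\<xi>. pseudotraj \<phi> d \<xi> \<longrightarrow> (\<forall>s. \<forall>t\<in>{0..T}. dist (\<xi> (s+t)) (\<phi> t (\<xi> s)) < \<eta>)"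
    using shadow[OF fl cp tr(2), of T] by blast
  show ?thesis
  proof (rule exI[of _ \<rho>], rule conjI[OF tr(1)], rule exI[of _ d], rule conjI[OF d(1)], intro allI impI)
    fix \<xi> s t assume ps: "pseudotraj \<phi> d \<xi>" and xs: "\<xi> s \<in> cball q \<rho>" and t: "(t::real) \<ge> 0"
    have "\<forall>s. \<forall>t\<in>{0..T}. dist (\<xi> (s+t)) (\<phi> t (\<xi> s)) < \<eta>" using d(2) ps by blast
    from tr(3)[OF this xs t] show "\<xi> (s+t) \<in> ball q \<epsilon>" .
  qed
qed

lemma trap_pt_back:
  fixes \<phi> :: "real \<Rightarrow> 'a::metric_space \<Rightarrow> 'a"
  assumes fl: "is_flow \<phi>" and cp: "compact (UNIV::'a set)"
    and fin: "finite (limit_set \<phi>)" and st: "lyap_unstable \<phi> q" and "\<epsilon> > 0"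
  shows "\<exists>\<rho>>0. \<exists>d>0. \<forall>\<xi>. pseudotraj \<phi> d \<xi> \<longrightarrow>
           (\<forall>s. \<xi> s \<in> cball q \<rho> \<longrightarrow> (\<forall>t\<ge>0. \<xi> (s-t) \<in> ball q \<epsilon>))"
proof -
  have fl': "is_flow (\<lambda>t. \<phi> (-t))" by (rule rev_flow[OF fl])
  have fin': "finite (limit_set (\<lambda>t. \<phi> (-t)))" using fin rev_limit by metis
  have st': "lyap_stable (\<lambda>t. \<phi> (-t)) q" using st rev_stable by metis
  obtain \<rho> \<eta> T where tr: "\<rho> > 0" "\<eta> > 0" "\<And>\<xi> s t. (\<forall>s. \<forall>t\<in>{0..T}. dist (\<xi> (s+t)) (\<phi> (-t) (\<xi> s)) < \<eta>) \<Longrightarrow>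
           \<xi> s \<in> cball q \<rho> \<Longrightarrow> t \<ge> 0 \<Longrightarrow> \<xi> (s+t) \<in> ball q \<epsilon>"
    using trap[OF fl' cp fin' st' \<open>\<epsilon>>0\<close>] by blast
  obtain d where d: "d > 0" "\<forall>\<xi>. pseudotraj \<phi> d \<xi> \<longrightarrow> (\<forall>s. \<forall>t\<in>{0..T}. dist (\<xi> (s-t)) (\<phi> (-t) (\<xi> s)) < \<eta>)"
    using shadow[OF fl cp tr(2), of T] by blast
  show ?thesis
  proof (rule exI[of _ \<rho>], rule conjI[OF tr(1)], rule exI[of _ d], rule conjI[OF d(1)], intro allI impI)
    fix \<xi> s t assume ps: "pseudotraj \<phi> d \<xi>" and xs: "\<xi> s \<in> cball q \<rho>" and t: "(t::real) \<ge> 0"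
    have "\<forall>s. \<forall>t\<in>{0..T}. dist ((\<lambda>u. \<xi> (-u)) (s+t)) (\<phi> (-t) ((\<lambda>u. \<xi> (-u)) s)) < \<eta>"
    proof (intro allI ballI)
      fix s t assume "t \<in> {0..T}"
      then have "dist (\<xi> (-s-t)) (\<phi> (-t) (\<xi> (-s))) < \<eta>" using d(2) ps by blast
      then show "dist ((\<lambda>u. \<xi> (-u)) (s+t)) (\<phi> (-t) ((\<lambda>u. \<xi> (-u)) s)) < \<eta>" by (simp add: algebra_simps)
    qed
    moreover have "(\<lambda>u. \<xi> (-u)) (-s) \<in> cball q \<rho>" using xs by simp
    ultimately have "(\<lambda>u. \<xi> (-u)) ((-s)+t) \<in> ball q \<epsilon>" by (rule tr(3)) (rule t)
    then show "\<xi> (s-t) \<in> ball q \<epsilon>" by simp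
  qed
qed

lemma reach:
  fixes \<phi> :: "real \<Rightarrow> 'a::metric_space \<Rightarrow> 'a"
  assumes fl: "is_flow \<phi>" and cp: "compact (UNIV::'a set)"
    and sub: "limit_set \<phi> \<subseteq> Sing \<phi>"
    and ss: "\<forall>p\<in>limit_set \<phi>. lyap_stable \<phi> p \<or> lyap_unstable \<phi> p"
    and "\<rho> > 0" and "r2 > 0" and x: "x \<notin> (\<Union>p\<in>Sing \<phi>. ball p r2)"
  shows "\<exists>t\<ge>0. \<exists>q\<in>Sing \<phi>. lyap_stable \<phi> q \<and> \<phi> t x \<in> ball q \<rho>"
proof -
  obtain y and s :: "nat \<Rightarrow> real" where s: "filterlim s at_top sequentially" "\<forall>n. s n \<ge> 0"
      "(\<lambda>n. \<phi> (s n) x) \<longlonglongrightarrow> y" using omega_exists[OF cp, of 0 \<phi> x] by blast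
  have yl: "y \<in> limit_set \<phi>" using omega_in_limit[of s \<phi> x y] s(1) s(3) by blast
  have stab: "lyap_stable \<phi> y"
  proof (rule ccontr)
    assume "\<not> lyap_stable \<phi> y"
    then have "lyap_unstable \<phi> y" using ss yl by blast
    then obtain U where U: "open U" "y \<in> U" "\<forall>z\<in>U. \<forall>t\<le>0. \<phi> t z \<in> ball y r2"
      unfolding lyap_unstable_def using \<open>r2>0\<close> by (meson centre_in_ball open_ball)
    have "eventually (\<lambda>n. \<phi> (s n) x \<in> U) sequentially" using s(3) U(1,2) by (rule topological_tendstoD)
    then obtain n where "\<phi> (s n) x \<in> U" by (meson eventually_sequentially order_refl)
    then have "\<phi> (- s n) (\<phi> (s n) x) \<in> ball y r2" using U(3) s(2) by simp
    then have "x \<in> ball y r2" using flow_inv[OF fl] by simp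
    then show False using x yl sub by blast
  qed
  have "eventually (\<lambda>n. dist (\<phi> (s n) x) y < \<rho>) sequentially"
    using s(3) \<open>\<rho>>0\<close> unfolding tendsto_iff by blast
  then obtain n where "dist (\<phi> (s n) x) y < \<rho>" by (meson eventually_sequentially order_refl)
  then show ?thesis using s(2) stab yl sub
    by (intro exI[of _ "s n"] conjI bexI[of _ y]) (auto simp: dist_commute)
qed

lemma reach_unif:
  fixes \<phi> :: "real \<Rightarrow> 'a::metric_space \<Rightarrow> 'a"
  assumes fl: "is_flow \<phi>" and cp: "compact (UNIV::'a set)"
    and sub: "limit_set \<phi> \<subseteq> Sing \<phi>"
    and ss: "\<forall>p\<in>limit_set \<phi>. lyap_stable \<phi> p \<or> lyap_unstable \<phi> p"
    and "\<rho> > 0" "r2 > 0"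
  shows "\<exists>T\<ge>0. \<forall>x. x \<notin> (\<Union>p\<in>Sing \<phi>. ball p r2) \<longrightarrow>
           (\<exists>t\<in>{0..T}. \<exists>q\<in>Sing \<phi>. lyap_stable \<phi> q \<and> \<phi> t x \<in> ball q \<rho>)"
proof -
  define F where "F = UNIV - (\<Union>p\<in>Sing \<phi>. ball p r2)"
  have Fc: "compact F" unfolding F_def
    using closed_Int_compact[OF _ cp, of "UNIV - (\<Union>p\<in>Sing \<phi>. ball p r2)"]
    by (simp add: closed_Diff open_UN)
  define W where "W = (\<Union>q\<in>{q\<in>Sing \<phi>. lyap_stable \<phi> q}. ball q \<rho>)"
  obtain K where K: "K \<subseteq> {0..}" "finite K" "F \<subseteq> (\<Union>t\<in>K. \<phi> t -` W)"
  proof (rule compactE_image[OF Fc, of "{0..}" "\<lambda>t. \<phi> t -` W"])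
    show "open (\<phi> t -` W)" for t
      by (rule open_vimage[OF _ flow_cont[OF fl]]) (auto simp: W_def open_UN)
    show "F \<subseteq> (\<Union>t\<in>{0..}. \<phi> t -` W)"
    proof
      fix x assume "x \<in> F"
      then obtain t q where "t \<ge> 0" "q \<in> Sing \<phi>" "lyap_stable \<phi> q" "\<phi> t x \<in> ball q \<rho>"
        using reach[OF fl cp sub ss \<open>\<rho>>0\<close> \<open>r2>0\<close>, of x] unfolding F_def by blast
      then show "x \<in> (\<Union>t\<in>{0..}. \<phi> t -` W)" unfolding W_def by blast
    qed
  qed blast
  define T where "T = Max (insert 0 K)"
  show ?thesis
  proof (intro exI[of _ T] conjI allI impI)
    show "T \<ge> 0" unfolding T_def using K(2) by simp
    fix x assume "x \<notin> (\<Union>p\<in>Sing \<phi>. ball p r2)"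
    then obtain t where t: "t \<in> K" "\<phi> t x \<in> W" using K(3) unfolding F_def by blast
    have "t \<le> T" unfolding T_def using K(2) t(1) by simp
    then show "\<exists>t\<in>{0..T}. \<exists>q\<in>Sing \<phi>. lyap_stable \<phi> q \<and> \<phi> t x \<in> ball q \<rho>"
      using t K(1) unfolding W_def by (intro bexI[of _ t]) auto
  qed
qed

theorem mainTheorem8:
  fixes \<phi> :: "real \<Rightarrow> 'a::metric_space \<Rightarrow> 'a"
    and \<epsilon>0 r2 :: real
  assumes "compact (UNIV :: 'a set)"
    and "is_flow \<phi>"
    and "finite (limit_set \<phi>)"
    and "limit_set \<phi> \<subseteq> Sing \<phi>"
    and "\<forall>p\<in>limit_set \<phi>. lyap_stable \<phi> p \<or> lyap_unstable \<phi> p"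
    and "\<epsilon>0 > 0" and "r2 > 0"
  shows "\<exists>d1>0. \<exists>S0>0. \<forall>\<xi> s0.
           pseudotraj \<phi> d1 \<xi> \<and> \<xi> s0 \<in> UNIV - (\<Union>p\<in>Sing \<phi>. ball p r2) \<longrightarrow>
           (\<exists>p q. p \<in> Sing \<phi> \<and> lyap_unstable \<phi> p \<and> q \<in> Sing \<phi> \<and> lyap_stable \<phi> q
              \<and> (\<forall>t\<le>-S0. \<xi> (t + s0) \<in> ball p r2)
              \<and> (\<forall>t\<ge>S0. \<xi> (t + s0) \<in> ball q r2)
              \<and> (\<forall>t\<in>{-S0..2*S0}. dist (\<xi> (t + s0)) (\<phi> t (\<xi> s0)) < min r2 (\<epsilon>0 / 4)))"
proof -
  note cp = assms(1) and fl = assms(2) and fin = assms(3) and sub = assms(4) and ss = assms(5)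
  have finS: "finite (Sing \<phi>)" using Sing_sub_limit finite_subset fin by blast
  define P1 where "P1 = (\<lambda>p \<rho> d. \<forall>\<xi>. pseudotraj \<phi> d \<xi> \<longrightarrow>
           (\<forall>s. \<xi> s \<in> cball p \<rho> \<longrightarrow> (\<forall>t\<ge>0. \<xi> (s+t) \<in> ball p r2)))"
  define P2 where "P2 = (\<lambda>p \<rho> d. \<forall>\<xi>. pseudotraj \<phi> d \<xi> \<longrightarrow>
           (\<forall>s. \<xi> s \<in> cball p \<rho> \<longrightarrow> (\<forall>t\<ge>0. \<xi> (s-t) \<in> ball p r2)))"
  obtain \<rho>1 d1 where r1: "\<rho>1 > 0" "d1 > 0" "\<forall>p\<in>{p\<in>Sing \<phi>. lyap_stable \<phi> p}. P1 p \<rho>1 d1"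
  proof -
    have "\<exists>x>0. \<exists>y>0. \<forall>a\<in>{p\<in>Sing \<phi>. lyap_stable \<phi> p}. P1 a x y"
    proof (rule finite_unif)
      show "finite {p\<in>Sing \<phi>. lyap_stable \<phi> p}" using finS by simp
      show "\<forall>a\<in>{p\<in>Sing \<phi>. lyap_stable \<phi> p}. \<exists>x>0. \<exists>y>0. P1 a x y"
        using trap_pt[OF fl cp fin _ assms(7)] unfolding P1_def by blast
      fix a x y x' y' assume A: "P1 a x y" "0 < x'" "x' \<le> x" "0 < y'" "y' \<le> y"
      show "P1 a x' y'" unfolding P1_def
      proof (intro allI impI)
        fix \<xi> s t assume ps: "pseudotraj \<phi> y' \<xi>" and xs: "\<xi> s \<in> cball a x'" and t: "(t::real) \<ge> 0"
        have "pseudotraj \<phi> y \<xi>" using pseudo_mono[OF ps] A(5) .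
        moreover have "\<xi> s \<in> cball a x" using xs A(3) by auto
        ultimately show "\<xi> (s+t) \<in> ball a r2" using A(1) t unfolding P1_def by blast
      qed
    qed
    then show ?thesis using that by blast
  qed
  obtain \<rho>2 d2 where r2: "\<rho>2 > 0" "d2 > 0" "\<forall>p\<in>{p\<in>Sing \<phi>. lyap_unstable \<phi> p}. P2 p \<rho>2 d2"
  proof -
    have "\<exists>x>0. \<exists>y>0. \<forall>a\<in>{p\<in>Sing \<phi>. lyap_unstable \<phi> p}. P2 a x y"
    proof (rule finite_unif)
      show "finite {p\<in>Sing \<phi>. lyap_unstable \<phi> p}" using finS by simp
      show "\<forall>a\<in>{p\<in>Sing \<phi>. lyap_unstable \<phi> p}. \<exists>x>0. \<exists>y>0. P2 a x y"
        using trap_pt_back[OF fl cp fin _ assms(7)] unfolding P2_def by blast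
      fix a x y x' y' assume A: "P2 a x y" "0 < x'" "x' \<le> x" "0 < y'" "y' \<le> y"
      show "P2 a x' y'" unfolding P2_def
      proof (intro allI impI)
        fix \<xi> s t assume ps: "pseudotraj \<phi> y' \<xi>" and xs: "\<xi> s \<in> cball a x'" and t: "(t::real) \<ge> 0"
        have "pseudotraj \<phi> y \<xi>" using pseudo_mono[OF ps] A(5) .
        moreover have "\<xi> s \<in> cball a x" using xs A(3) by auto
        ultimately show "\<xi> (s-t) \<in> ball a r2" using A(1) t unfolding P2_def by blast
      qed
    qed
    then show ?thesis using that by blast
  qed
  define \<rho> where "\<rho> = min \<rho>1 \<rho>2"
  have \<rho>: "\<rho> > 0" "\<rho>/2 > 0" using r1 r2 unfolding \<rho>_def by auto
  obtain T1 where T1: "T1 \<ge> 0" "\<forall>x. x \<notin> (\<Union>p\<in>Sing \<phi>. ball p r2) \<longrightarrow>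
           (\<exists>t\<in>{0..T1}. \<exists>q\<in>Sing \<phi>. lyap_stable \<phi> q \<and> \<phi> t x \<in> ball q (\<rho>/2))"
    using reach_unif[OF fl cp sub ss \<rho>(2) assms(7)] by blast
  have fl': "is_flow (\<lambda>t. \<phi> (-t))" by (rule rev_flow[OF fl])
  have sub': "limit_set (\<lambda>t. \<phi> (-t)) \<subseteq> Sing (\<lambda>t. \<phi> (-t))" using sub by (simp add: rev_limit rev_Sing)
  have ss': "\<forall>p\<in>limit_set (\<lambda>t. \<phi> (-t)). lyap_stable (\<lambda>t. \<phi> (-t)) p \<or> lyap_unstable (\<lambda>t. \<phi> (-t)) p"
    using ss by (auto simp: rev_limit rev_stable rev_unstable)
  obtain T2 where T2: "T2 \<ge> 0" "\<forall>x. x \<notin> (\<Union>p\<in>Sing \<phi>. ball p r2) \<longrightarrow>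
           (\<exists>t\<in>{0..T2}. \<exists>q\<in>Sing \<phi>. lyap_unstable \<phi> q \<and> \<phi> (-t) x \<in> ball q (\<rho>/2))"
    using reach_unif[OF fl' cp sub' ss' \<rho>(2) assms(7)] unfolding rev_Sing rev_stable by blast
  define S0 where "S0 = max (max T1 T2) 1"
  have S0: "S0 > 0" "T1 \<le> S0" "T2 \<le> S0" unfolding S0_def by auto
  define \<eta> where "\<eta> = min (\<rho>/2) (min r2 (\<epsilon>0 / 4))"
  have \<eta>: "\<eta> > 0" using \<rho> assms(6,7) unfolding \<eta>_def by auto
  obtain dS where dS: "dS > 0" "\<forall>\<xi>. pseudotraj \<phi> dS \<xi> \<longrightarrow> (\<forall>s. \<forall>t\<in>{0..2*S0}. dist (\<xi> (s+t)) (\<phi> t (\<xi> s)) < \<eta>)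
           \<and> (\<forall>s. \<forall>t\<in>{0..2*S0}. dist (\<xi> (s-t)) (\<phi> (-t) (\<xi> s)) < \<eta>)"
    using shadow[OF fl cp \<eta>, of "2*S0"] by blast
  define d where "d = min (min d1 d2) dS"
  have d: "d > 0" using r1 r2 dS unfolding d_def by auto
  show ?thesis
  proof (rule exI[of _ d], rule conjI[OF d], rule exI[of _ S0], rule conjI[OF S0(1)], intro allI impI)
    fix \<xi> s0 assume H: "pseudotraj \<phi> d \<xi> \<and> \<xi> s0 \<in> UNIV - (\<Union>p\<in>Sing \<phi>. ball p r2)"
    then have ps1: "pseudotraj \<phi> d1 \<xi>" and ps2: "pseudotraj \<phi> d2 \<xi>" and psS: "pseudotraj \<phi> dS \<xi>"
      and xF: "\<xi> s0 \<notin> (\<Union>p\<in>Sing \<phi>. ball p r2)"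
      unfolding d_def by (auto elim: pseudo_mono)
    have shF: "\<And>s t. t\<in>{0..2*S0} \<Longrightarrow> dist (\<xi> (s+t)) (\<phi> t (\<xi> s)) < \<eta>"
      and shB: "\<And>s t. t\<in>{0..2*S0} \<Longrightarrow> dist (\<xi> (s-t)) (\<phi> (-t) (\<xi> s)) < \<eta>"
      using dS(2) psS by blast+
    obtain t1 q where q: "t1 \<in> {0..T1}" "q \<in> Sing \<phi>" "lyap_stable \<phi> q" "\<phi> t1 (\<xi> s0) \<in> ball q (\<rho>/2)"
      using T1(2) xF by blast
    obtain t2 p where p: "t2 \<in> {0..T2}" "p \<in> Sing \<phi>" "lyap_unstable \<phi> p" "\<phi> (-t2) (\<xi> s0) \<in> ball p (\<rho>/2)"
      using T2(2) xF by blast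
    have "dist (\<xi> (s0+t1)) (\<phi> t1 (\<xi> s0)) < \<rho>/2" using shF[of t1 s0] q(1) S0 \<eta>_def by auto
    then have "\<xi> (s0+t1) \<in> cball q \<rho>1"
      using q(4) dist_triangle[of q "\<xi> (s0+t1)" "\<phi> t1 (\<xi> s0)"] \<rho>_def by (simp add: dist_commute)
    then have fw: "\<forall>u\<ge>0. \<xi> (s0+t1+u) \<in> ball q r2" using r1(3) q(2,3) ps1 unfolding P1_def by blast
    have "dist (\<xi> (s0-t2)) (\<phi> (-t2) (\<xi> s0)) < \<rho>/2" using shB[of t2 s0] p(1) S0 \<eta>_def by auto
    then have "\<xi> (s0-t2) \<in> cball p \<rho>2"
      using p(4) dist_triangle[of p "\<xi> (s0-t2)" "\<phi> (-t2) (\<xi> s0)"] \<rho>_def by (simp add: dist_commute)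
    then have bw: "\<forall>u\<ge>0. \<xi> (s0-t2-u) \<in> ball p r2" using r2(3) p(2,3) ps2 unfolding P2_def by blast
    show "\<exists>p q. p \<in> Sing \<phi> \<and> lyap_unstable \<phi> p \<and> q \<in> Sing \<phi> \<and> lyap_stable \<phi> q
              \<and> (\<forall>t\<le>-S0. \<xi> (t + s0) \<in> ball p r2)
              \<and> (\<forall>t\<ge>S0. \<xi> (t + s0) \<in> ball q r2)
              \<and> (\<forall>t\<in>{-S0..2*S0}. dist (\<xi> (t + s0)) (\<phi> t (\<xi> s0)) < min r2 (\<epsilon>0 / 4))"
    proof (rule exI[of _ p], rule exI[of _ q], intro conjI p(2,3) q(2,3) allI impI ballI)
      fix t assume "t \<le> -S0"
      then have "-t - t2 \<ge> 0" using p(1) S0 by auto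
      then have "\<xi> (s0-t2-(-t - t2)) \<in> ball p r2" using bw by blast
      then show "\<xi> (t + s0) \<in> ball p r2" by (simp add: algebra_simps)
    next
      fix t assume "t \<ge> S0"
      then have "t - t1 \<ge> 0" using q(1) S0 by auto
      then have "\<xi> (s0+t1+(t - t1)) \<in> ball q r2" using fw by blast
      then show "\<xi> (t + s0) \<in> ball q r2" by (simp add: algebra_simps)
    next
      fix t assume t: "t \<in> {-S0..2*S0}"
      show "dist (\<xi> (t + s0)) (\<phi> t (\<xi> s0)) < min r2 (\<epsilon>0 / 4)"
      proof (cases "t \<ge> 0")
        case True
        then have "dist (\<xi> (s0+t)) (\<phi> t (\<xi> s0)) < \<eta>" using shF t by auto
        then show ?thesis unfolding \<eta>_def by (simp add: add.commute)
      next
        case False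
        then have "dist (\<xi> (s0-(-t))) (\<phi> (-(-t)) (\<xi> s0)) < \<eta>" using shB[of "-t" s0] t S0 by auto
        then show ?thesis unfolding \<eta>_def by (simp add: add.commute)
      qed
    qed
  qed
qed

end
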